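(* Let $\mathbb{F}$ be a finite field and $X\subset\mathbb{F}$. Given a decision tree $T$ for $X$, there is a pruned polynomial decision tree $T'$ deciding the same membership with $|T'|\leq 4|T|$.
   Context: A computation tree over $\mathbb{F}$ is a rooted binary tree; the root takes the input $x\in\mathbb{F}$; each computation node $\nu$ computes a value $u_\nu$ by an arithmetic operation (a constant, multiplication by a constant, $+$, $-$, $\times$, or $/$) on values computed at earlier nodes; each decision node tests an equality $u_\mu=u_\lambda$ between previously computed values and has two outgoing edges labeled "$=$" and "$\neq$". A decision tree for $X$ is a computation tree with leaves labeled "$\in$"/"$\notin$" such that input $x$ reaches a leaf labeled "$\in$" iff $x\in X$. $|T|$ is the length of the longest path through $T$. For $x\in\mathbb{F}$, $\mathbf{p}_x$ is the path $T$ takes on input $x$. $T$ is pruned if (1) for every decision node $\nu$ there are inputs $x,y$ such that $\mathbf{p}_x,\mathbf{p}_y$ both pass through $\nu$ but take different forks there, and (2) every computation node has at least one decision node as a descendant. $T$ is polynomial if no computation node performs division. *)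

theory Defs
  imports Main
begin

text \<open>Along a path, the computed values are kept
in a list: index 0 is the input x, index k is the value computed at the k-th
computation node on the path.  Operands refer to these indices (earlier nodes).\<close>

datatype 'f cop =
    OConst 'f
  | OScale 'f nat
  | OAdd nat nat
  | OSub nat nat
  | OMul nat nat
  | ODiv nat nat

datatype 'f ctree =
    Leaf bool                              \<comment> \<open>True = "in", False = "not in"\<close>
  | Comp "'f cop" "'f ctree"
  | Dec nat nat "'f ctree" "'f ctree"     \<comment> \<open>test u_i = u_j; "=" child, "~=" child\<close>

definition getv :: "'f list \<Rightarrow> nat \<Rightarrow> 'f option" where
  "getv vs i = (if i < length vs then Some (vs ! i) else None)"

fun eval_op :: "'f::field cop \<Rightarrow> 'f list \<Rightarrow> 'f option" where
  "eval_op (OConst c) vs = Some c"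
| "eval_op (OScale c i) vs = map_option (\<lambda>a. c * a) (getv vs i)"
| "eval_op (OAdd i j) vs = (case (getv vs i, getv vs j) of (Some a, Some b) \<Rightarrow> Some (a + b) | _ \<Rightarrow> None)"
| "eval_op (OSub i j) vs = (case (getv vs i, getv vs j) of (Some a, Some b) \<Rightarrow> Some (a - b) | _ \<Rightarrow> None)"
| "eval_op (OMul i j) vs = (case (getv vs i, getv vs j) of (Some a, Some b) \<Rightarrow> Some (a * b) | _ \<Rightarrow> None)"
| "eval_op (ODiv i j) vs = (case (getv vs i, getv vs j) of
      (Some a, Some b) \<Rightarrow> (if b = 0 then None else Some (a / b)) | _ \<Rightarrow> None)"

definition test :: "'f list \<Rightarrow> nat \<Rightarrow> nat \<Rightarrow> bool option" where
  "test vs i j = (case (getv vs i, getv vs j) of (Some a, Some b) \<Rightarrow> Some (a = b) | _ \<Rightarrow> None)"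

fun run :: "'f::field ctree \<Rightarrow> 'f list \<Rightarrow> bool option" where
  "run (Leaf b) vs = Some b"
| "run (Comp op t) vs = (case eval_op op vs of None \<Rightarrow> None | Some u \<Rightarrow> run t (vs @ [u]))"
| "run (Dec i j t1 t2) vs = (case test vs i j of None \<Rightarrow> None
      | Some True \<Rightarrow> run t1 vs | Some False \<Rightarrow> run t2 vs)"

definition decides :: "'f::field ctree \<Rightarrow> 'f set \<Rightarrow> bool" where
  "decides T X \<longleftrightarrow> (\<forall>x. run T [x] = Some (x \<in> X))"

text \<open>|T|: length (number of edges = number of internal nodes) of the longest path.\<close>
fun height :: "'f ctree \<Rightarrow> nat" where
  "height (Leaf b) = 0"
| "height (Comp op t) = Suc (height t)"
| "height (Dec i j t1 t2) = Suc (max (height t1) (height t2))"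

fun is_div :: "'f cop \<Rightarrow> bool" where
  "is_div (ODiv i j) = True"
| "is_div _ = False"

fun polynomial :: "'f ctree \<Rightarrow> bool" where
  "polynomial (Leaf b) = True"
| "polynomial (Comp op t) = (\<not> is_div op \<and> polynomial t)"
| "polynomial (Dec i j t1 t2) = (polynomial t1 \<and> polynomial t2)"

text \<open>Does the tree contain a decision node (i.e. a decision node descendant of its parent)?\<close>
fun has_dec :: "'f ctree \<Rightarrow> bool" where
  "has_dec (Leaf b) = False"
| "has_dec (Comp op t) = has_dec t"
| "has_dec (Dec i j t1 t2) = True"

text \<open>pruned_at t S v: every node of the subtree t satisfies the pruning conditions,
where S is the set of inputs whose path reaches the root of t and v x the values
computed along that path so far.\<close>
fun pruned_at :: "'f::field ctree \<Rightarrow> 'f set \<Rightarrow> ('f \<Rightarrow> 'f list) \<Rightarrow> bool" where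
  "pruned_at (Leaf b) S v = True"
| "pruned_at (Comp op t) S v =
     (has_dec t \<and>
      pruned_at t {x \<in> S. eval_op op (v x) \<noteq> None} (\<lambda>x. v x @ [the (eval_op op (v x))]))"
| "pruned_at (Dec i j t1 t2) S v =
     ((\<exists>x\<in>S. \<exists>y\<in>S. test (v x) i j = Some True \<and> test (v y) i j = Some False) \<and>
      pruned_at t1 {x \<in> S. test (v x) i j = Some True} v \<and>
      pruned_at t2 {x \<in> S. test (v x) i j = Some False} v)"

definition pruned :: "'f::field ctree \<Rightarrow> bool" where
  "pruned T \<longleftrightarrow> pruned_at T UNIV (\<lambda>x. [x])"

end

theory Submission
  imports Defs
begin

section \<open>Pruning\<close>

fun leafof :: "'f ctree \<Rightarrow> bool" where
  "leafof (Leaf b) = b"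
| "leafof (Comp op t) = leafof t"
| "leafof (Dec i j t1 t2) = leafof t1"

lemma leafof_run: "\<not> has_dec t \<Longrightarrow> run t ws = Some b \<Longrightarrow> b = leafof t"
  by (induction t arbitrary: ws) (auto split: option.splits)

fun prune :: "'f::field ctree \<Rightarrow> 'f set \<Rightarrow> ('f \<Rightarrow> 'f list) \<Rightarrow> 'f ctree" where
  "prune (Leaf b) S v = Leaf b"
| "prune (Comp op t) S v =
     (let t' = prune t {x \<in> S. eval_op op (v x) \<noteq> None} (\<lambda>x. v x @ [the (eval_op op (v x))])
      in if has_dec t' then Comp op t' else Leaf (leafof t'))"
| "prune (Dec i j t1 t2) S v =
     (let S1 = {x \<in> S. test (v x) i j = Some True}; S2 = {x \<in> S. test (v x) i j = Some False} in
      if S1 = {} then prune t2 S2 v else if S2 = {} then prune t1 S1 v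
      else Dec i j (prune t1 S1 v) (prune t2 S2 v))"

lemma prune_props:
  assumes "\<forall>x\<in>S. run t (v x) = Some (P x)"
  shows "(\<forall>x\<in>S. run (prune t S v) (v x) = Some (P x)) \<and> pruned_at (prune t S v) S v
     \<and> height (prune t S v) \<le> height t \<and> (polynomial t \<longrightarrow> polynomial (prune t S v))"
  using assms
proof (induction t arbitrary: S v)
  case (Leaf b)
  then show ?case by simp
next
  case (Comp op t)
  define S' where "S' = {x \<in> S. eval_op op (v x) \<noteq> None}"
  define v' where "v' = (\<lambda>x. v x @ [the (eval_op op (v x))])"
  have h: "\<forall>x\<in>S'. run t (v' x) = Some (P x)"
    using Comp.prems by (auto simp: S'_def v'_def split: option.splits)
  note IH = Comp.IH[OF h]
  define t' where "t' = prune t S' v'"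
  have pe: "prune (Comp op t) S v = (if has_dec t' then Comp op t' else Leaf (leafof t'))"
    by (simp add: t'_def S'_def v'_def Let_def)
  show ?case
  proof (cases "has_dec t'")
    case True
    then show ?thesis using IH Comp.prems unfolding pe
      by (auto simp: t'_def S'_def v'_def split: option.splits)
  next
    case False
    have "\<forall>x\<in>S. run (Leaf (leafof t')) (v x) = Some (P x)"
    proof
      fix x assume x: "x \<in> S"
      then obtain u where u: "eval_op op (v x) = Some u" using Comp.prems
        by (cases "eval_op op (v x)") auto
      have xs: "x \<in> S'" using x u by (auto simp: S'_def)
      have "run t' (v' x) = Some (P x)" using IH xs unfolding t'_def by blast
      then show "run (Leaf (leafof t')) (v x) = Some (P x)" using leafof_run[OF False] by simp
    qed
    then show ?thesis using False unfolding pe by simp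
  qed
next
  case (Dec i j t1 t2)
  define S1 where "S1 = {x \<in> S. test (v x) i j = Some True}"
  define S2 where "S2 = {x \<in> S. test (v x) i j = Some False}"
  have h1: "\<forall>x\<in>S1. run t1 (v x) = Some (P x)" using Dec.prems by (auto simp: S1_def)
  have h2: "\<forall>x\<in>S2. run t2 (v x) = Some (P x)" using Dec.prems by (auto simp: S2_def)
  note IH1 = Dec.IH(1)[OF h1] and IH2 = Dec.IH(2)[OF h2]
  have cov: "\<forall>x\<in>S. x \<in> S1 \<or> x \<in> S2" using Dec.prems
    by (auto simp: S1_def S2_def split: option.splits bool.splits)
  have pe: "prune (Dec i j t1 t2) S v = (if S1 = {} then prune t2 S2 v else if S2 = {} then prune t1 S1 v
      else Dec i j (prune t1 S1 v) (prune t2 S2 v))"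
    unfolding S1_def S2_def by (simp only: prune.simps Let_def)
  show ?case
  proof (cases "S1 = {}")
    case True
    have "S2 = S" using cov True by (auto simp: S2_def)
    then show ?thesis using IH2 True unfolding pe by auto
  next
    case F1: False
    show ?thesis
    proof (cases "S2 = {}")
      case True
      have "S1 = S" using cov True by (auto simp: S1_def)
      then show ?thesis using IH1 True F1 unfolding pe by auto
    next
      case False
      have r: "\<forall>x\<in>S. run (Dec i j (prune t1 S1 v) (prune t2 S2 v)) (v x) = Some (P x)"
      proof
        fix x assume "x \<in> S"
        then show "run (Dec i j (prune t1 S1 v) (prune t2 S2 v)) (v x) = Some (P x)"
          using cov IH1 IH2 by (auto simp: S1_def S2_def)
      qed
      have "pruned_at (Dec i j (prune t1 S1 v) (prune t2 S2 v)) S v"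
        using IH1 IH2 F1 False by (auto simp: S1_def S2_def)
      then show ?thesis using IH1 IH2 F1 False r unfolding pe
        by auto
    qed
  qed
qed

section \<open>Straight-line programs\<close>

fun comps :: "'f cop list \<Rightarrow> 'f ctree \<Rightarrow> 'f ctree" where
  "comps [] t = t"
| "comps (op # ops) t = Comp op (comps ops t)"

fun exec :: "'f::field cop list \<Rightarrow> 'f list \<Rightarrow> 'f list option" where
  "exec [] ws = Some ws"
| "exec (op # ops) ws = (case eval_op op ws of None \<Rightarrow> None | Some u \<Rightarrow> exec ops (ws @ [u]))"

lemma run_comps: "exec ops ws = Some ws' \<Longrightarrow> run (comps ops t) ws = run t ws'"
  by (induction ops arbitrary: ws) (auto split: option.splits)

lemma exec_append: "exec (o1 @ o2) ws = (case exec o1 ws of None \<Rightarrow> None | Some w \<Rightarrow> exec o2 w)"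
  by (induction o1 arbitrary: ws) (auto split: option.splits)

lemma height_comps: "height (comps ops t) = length ops + height t"
  by (induction ops) auto

lemma poly_comps: "(\<forall>op\<in>set ops. \<not> is_div op) \<Longrightarrow> polynomial t \<Longrightarrow> polynomial (comps ops t)"
  by (induction ops) auto

definition dok :: "'f list \<Rightarrow> nat option \<Rightarrow> bool" where
  "dok ws d = (case d of None \<Rightarrow> True | Some k \<Rightarrow> k < length ws)"

definition dv :: "'f::field list \<Rightarrow> nat option \<Rightarrow> 'f" where
  "dv ws d = (case d of None \<Rightarrow> 1 | Some k \<Rightarrow> ws ! k)"

lemma dok_app: "dok ws d \<Longrightarrow> dok (ws @ w) d"
  by (auto simp: dok_def split: option.splits)

lemma dv_app: "dok ws d \<Longrightarrow> dv (ws @ w) d = dv ws d"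
  by (auto simp: dok_def dv_def nth_append split: option.splits)

fun nmul :: "nat \<Rightarrow> nat option \<Rightarrow> nat \<Rightarrow> 'f cop list \<times> nat" where
  "nmul a None m = ([], a)"
| "nmul a (Some d) m = ([OMul a d], m)"

fun dmul :: "nat option \<Rightarrow> nat option \<Rightarrow> nat \<Rightarrow> 'f cop list \<times> nat option" where
  "dmul None d m = ([], d)"
| "dmul (Some b) None m = ([], Some b)"
| "dmul (Some b) (Some d) m = ([OMul b d], Some m)"

lemma nmul_len: "length (fst (nmul a d m)) \<le> 1"
  by (cases d) auto
lemma dmul_len: "length (fst (dmul b d m)) \<le> 1"
  by (cases b; cases d) auto
lemma nmul_nodiv: "\<forall>op\<in>set (fst (nmul a d m)). \<not> is_div op"
  by (cases d) auto
lemma dmul_nodiv: "\<forall>op\<in>set (fst (dmul b d m)). \<not> is_div op"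
  by (cases b; cases d) auto

lemma nmul_exec:
  fixes ws :: "'f::field list"
  assumes "a < length ws" "dok ws d"
  shows "\<exists>w'. exec (fst (nmul a d (length ws))) ws = Some (ws @ w')
     \<and> length w' = length (fst (nmul a d (length ws :: nat) :: 'f cop list \<times> nat))
     \<and> snd (nmul a d (length ws) :: 'f cop list \<times> nat) < length ws + length w'
     \<and> (ws @ w') ! snd (nmul a d (length ws) :: 'f cop list \<times> nat) = ws ! a * dv ws d"
  using assms by (cases d) (auto simp: dok_def dv_def getv_def nth_append)

lemma dmul_exec:
  fixes ws :: "'f::field list"
  assumes "dok ws b" "dok ws d"
  shows "\<exists>w'. exec (fst (dmul b d (length ws))) ws = Some (ws @ w')
     \<and> length w' = length (fst (dmul b d (length ws :: nat) :: 'f cop list \<times> nat option))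
     \<and> dok (ws @ w') (snd (dmul b d (length ws) :: 'f cop list \<times> nat option))
     \<and> dv (ws @ w') (snd (dmul b d (length ws) :: 'f cop list \<times> nat option)) = dv ws b * dv ws d"
  using assms by (cases b; cases d) (auto simp: dok_def dv_def getv_def nth_append)

section \<open>Translation to a polynomial tree\<close>

fun tr :: "(nat \<times> nat option) list \<Rightarrow> nat \<Rightarrow> 'f ctree \<Rightarrow> 'f ctree" where
  "tr E n (Leaf b) = Leaf b"
| "tr E n (Comp op t) = (case op of
     OConst c \<Rightarrow> Comp (OConst c) (tr (E @ [(n, None)]) (Suc n) t)
   | OScale c i \<Rightarrow> (if i < length E then Comp (OScale c (fst (E!i))) (tr (E @ [(n, snd (E!i))]) (Suc n) t)
                    else Leaf False)
   | OAdd i j \<Rightarrow> (if i < length E \<and> j < length E then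
       (let a = fst (E!i); b = snd (E!i); c = fst (E!j); d = snd (E!j);
            p1 = nmul a d n; p2 = nmul c b (n + length (fst p1)); m = n + length (fst p1) + length (fst p2);
            p4 = dmul b d (Suc m)
        in comps (fst p1 @ fst p2 @ [OAdd (snd p1) (snd p2)] @ fst p4)
             (tr (E @ [(m, snd p4)]) (Suc m + length (fst p4)) t))
       else Leaf False)
   | OSub i j \<Rightarrow> (if i < length E \<and> j < length E then
       (let a = fst (E!i); b = snd (E!i); c = fst (E!j); d = snd (E!j);
            p1 = nmul a d n; p2 = nmul c b (n + length (fst p1)); m = n + length (fst p1) + length (fst p2);
            p4 = dmul b d (Suc m)
        in comps (fst p1 @ fst p2 @ [OSub (snd p1) (snd p2)] @ fst p4)
             (tr (E @ [(m, snd p4)]) (Suc m + length (fst p4)) t))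
       else Leaf False)
   | OMul i j \<Rightarrow> (if i < length E \<and> j < length E then
       (let a = fst (E!i); b = snd (E!i); c = fst (E!j); d = snd (E!j);
            p4 = dmul b d (Suc n)
        in comps (OMul a c # fst p4) (tr (E @ [(n, snd p4)]) (Suc n + length (fst p4)) t))
       else Leaf False)
   | ODiv i j \<Rightarrow> (if i < length E \<and> j < length E then
       (let a = fst (E!i); b = snd (E!i); c = fst (E!j); d = snd (E!j);
            p1 = nmul a d n; p2 = nmul c b (n + length (fst p1)); m = n + length (fst p1) + length (fst p2)
        in comps (fst p1 @ fst p2) (tr (E @ [(snd p1, Some (snd p2))]) m t))
       else Leaf False))"
| "tr E n (Dec i j t1 t2) = (if i < length E \<and> j < length E then
       (let a = fst (E!i); b = snd (E!i); c = fst (E!j); d = snd (E!j);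
            p1 = nmul a d n; p2 = nmul c b (n + length (fst p1)); m = n + length (fst p1) + length (fst p2)
        in comps (fst p1 @ fst p2) (Dec (snd p1) (snd p2) (tr E m t1) (tr E m t2)))
       else Leaf False)"

lemma tr_poly: "polynomial (tr E n T)"
proof (induction T arbitrary: E n)
  case (Comp op t)
  then show ?case
    by (cases op) (auto simp: Let_def nmul_nodiv dmul_nodiv intro!: poly_comps)
qed (auto simp: Let_def nmul_nodiv intro!: poly_comps)

lemma hc: "length ops \<le> 4 \<Longrightarrow> height t' \<le> 4 * h \<Longrightarrow> height (comps ops t') \<le> 4 * Suc h"
  by (simp add: height_comps)

lemma len4: "length o1 \<le> 1 \<Longrightarrow> length o2 \<le> 1 \<Longrightarrow> length o4 \<le> 1 \<Longrightarrow> length (o1 @ o2 @ [x] @ o4) \<le> 4"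
  by simp
lemma len2: "length o1 \<le> 1 \<Longrightarrow> length (x # o1) \<le> 4"
  by simp
lemma len3: "length o1 \<le> 1 \<Longrightarrow> length o2 \<le> 1 \<Longrightarrow> length (o1 @ o2) \<le> 4"
  by simp

lemma hcD: "length ops \<le> 3 \<Longrightarrow> height t1' \<le> 4 * h1 \<Longrightarrow> height t2' \<le> 4 * h2 \<Longrightarrow>
  height (comps ops (Dec a c t1' t2')) \<le> 4 * Suc (max h1 h2)"
  by (simp add: height_comps)

lemma len3': "length o1 \<le> 1 \<Longrightarrow> length o2 \<le> 1 \<Longrightarrow> length (o1 @ o2) \<le> 3"
  by simp

lemma tr_height: "height (tr E n T) \<le> 4 * height T"
proof (induction T arbitrary: E n)
  case (Leaf b)
  then show ?case by simp
next
  case (Comp op t)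
  have IH: "\<And>E n. height (tr E n t) \<le> 4 * height t" by fact
  have L: "\<And>a d m. length (fst (nmul a d m :: 'a cop list \<times> nat)) \<le> 1"
          "\<And>b d m. length (fst (dmul b d m :: 'a cop list \<times> nat option)) \<le> 1"
    using nmul_len dmul_len by blast+
  show ?case
  proof (cases "\<exists>i j. op \<in> {OAdd i j, OSub i j, OMul i j, ODiv i j} \<and> i < length E \<and> j < length E")
    case True
    then obtain i j where ij: "i < length E" "j < length E" 
      and op: "op = OAdd i j \<or> op = OSub i j \<or> op = OMul i j \<or> op = ODiv i j" by blast
    from op show ?thesis
      apply (elim disjE)
      apply (simp only: tr.simps cop.case Let_def ij simp_thms if_True height.simps)
      apply (rule hc, rule len4, rule L, rule L, rule L, rule IH)
      apply (simp only: tr.simps cop.case Let_def ij simp_thms if_True height.simps)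
      apply (rule hc, rule len4, rule L, rule L, rule L, rule IH)
      apply (simp only: tr.simps cop.case Let_def ij simp_thms if_True height.simps)
      apply (rule hc, rule len2, rule L, rule IH)
      apply (simp only: tr.simps cop.case Let_def ij simp_thms if_True height.simps)
      apply (rule hc, rule len3, rule L, rule L, rule IH)
      done
  next
    case False
    then show ?thesis using IH
      by (cases op) (auto intro: le_trans[OF IH])
  qed
next
  case (Dec i j t1 t2)
  have L: "\<And>a d m. length (fst (nmul a d m :: 'a cop list \<times> nat)) \<le> 1"
    using nmul_len by blast
  show ?case
  proof (cases "i < length E \<and> j < length E")
    case True
    then have ij: "i < length E" "j < length E" by auto
    show ?thesis
      apply (simp only: tr.simps cop.case Let_def ij simp_thms if_True height.simps)
      apply (rule hcD, rule len3', rule L, rule L, rule Dec.IH, rule Dec.IH)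
      done
  next
    case False
    then have "tr E n (Dec i j t1 t2) = Leaf False" by (simp only: tr.simps if_False)
    then show ?thesis by simp
  qed
qed


section \<open>Simulation invariant\<close>

definition sim :: "(nat \<times> nat option) list \<Rightarrow> 'f::field list \<Rightarrow> 'f list \<Rightarrow> bool" where
  "sim E vs ws \<longleftrightarrow> length E = length vs \<and> (\<forall>i<length vs. fst (E!i) < length ws \<and> dok ws (snd (E!i))
     \<and> dv ws (snd (E!i)) \<noteq> 0 \<and> vs!i = ws!(fst (E!i)) / dv ws (snd (E!i)))"

lemma sim_get: "sim E vs ws \<Longrightarrow> i < length vs \<Longrightarrow> i < length E \<and> fst (E!i) < length ws \<and> dok ws (snd (E!i))
     \<and> dv ws (snd (E!i)) \<noteq> 0 \<and> vs!i = ws!(fst (E!i)) / dv ws (snd (E!i))"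
  unfolding sim_def by auto

lemma sim_app: "sim E vs ws \<Longrightarrow> sim E vs (ws @ w)"
  unfolding sim_def by (auto simp: dok_app dv_app nth_append)

lemma sim_ext: "sim E vs ws \<Longrightarrow> a < length ws \<Longrightarrow> dok ws b \<Longrightarrow> dv ws b \<noteq> 0 \<Longrightarrow> u = ws!a / dv ws b
  \<Longrightarrow> sim (E @ [(a, b)]) (vs @ [u]) ws"
  unfolding sim_def by (auto simp: nth_append less_Suc_eq)

lemma pre2:
  fixes ws :: "'f::field list"
  assumes "a < length ws" "c < length ws" "dok ws b" "dok ws d"
  shows "\<exists>w. exec (fst (nmul a d (length ws) :: 'f cop list \<times> nat) @
                   fst (nmul c b (length ws + length (fst (nmul a d (length ws) :: 'f cop list \<times> nat))) :: 'f cop list \<times> nat)) ws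
               = Some (ws @ w)
     \<and> length w = length (fst (nmul a d (length ws) :: 'f cop list \<times> nat)) +
                   length (fst (nmul c b (length ws + length (fst (nmul a d (length ws) :: 'f cop list \<times> nat))) :: 'f cop list \<times> nat))
     \<and> snd (nmul a d (length ws) :: 'f cop list \<times> nat) < length ws + length w
     \<and> snd (nmul c b (length ws + length (fst (nmul a d (length ws) :: 'f cop list \<times> nat))) :: 'f cop list \<times> nat) < length ws + length w
     \<and> (ws @ w) ! snd (nmul a d (length ws) :: 'f cop list \<times> nat) = ws ! a * dv ws d
     \<and> (ws @ w) ! snd (nmul c b (length ws + length (fst (nmul a d (length ws) :: 'f cop list \<times> nat))) :: 'f cop list \<times> nat) = ws ! c * dv ws b"
proof -
  obtain w1 where e1: "exec (fst (nmul a d (length ws) :: 'f cop list \<times> nat)) ws = Some (ws @ w1)"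
    and l1: "length w1 = length (fst (nmul a d (length ws) :: 'f cop list \<times> nat))"
    and i1: "snd (nmul a d (length ws) :: 'f cop list \<times> nat) < length ws + length w1"
    and v1: "(ws @ w1) ! snd (nmul a d (length ws) :: 'f cop list \<times> nat) = ws ! a * dv ws d"
    using nmul_exec[OF assms(1,4)] by blast
  have c1: "c < length (ws @ w1)" using assms(2) by simp
  have b1: "dok (ws @ w1) b" using assms(3) by (rule dok_app)
  obtain w2 where e2: "exec (fst (nmul c b (length (ws @ w1)) :: 'f cop list \<times> nat)) (ws @ w1) = Some ((ws @ w1) @ w2)"
    and l2: "length w2 = length (fst (nmul c b (length (ws @ w1)) :: 'f cop list \<times> nat))"
    and i2: "snd (nmul c b (length (ws @ w1)) :: 'f cop list \<times> nat) < length (ws @ w1) + length w2"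
    and v2: "((ws @ w1) @ w2) ! snd (nmul c b (length (ws @ w1)) :: 'f cop list \<times> nat) = (ws @ w1) ! c * dv (ws @ w1) b"
    using nmul_exec[OF c1 b1] by blast
  have L: "length (ws @ w1) = length ws + length (fst (nmul a d (length ws) :: 'f cop list \<times> nat))"
    using l1 by simp
  show ?thesis
    apply (rule exI[of _ "w1 @ w2"])
    using e1 e2 l1 l2 i1 i2 v1 v2 assms dv_app[OF assms(3), of w1] unfolding L[symmetric]
    by (auto simp: exec_append nth_append)
qed


lemma tr_correct:
  fixes T :: "'f::field ctree"
  shows "run T vs = Some r \<Longrightarrow> sim E vs ws \<Longrightarrow> run (tr E (length ws) T) ws = Some r"
proof (induction T arbitrary: E vs ws r)
  case (Leaf b)
  then show ?case by simp
next
  case (Comp op t)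
  note sim = Comp.prems(2)
  from Comp.prems(1) obtain u where u: "eval_op op vs = Some u" and rt: "run t (vs @ [u]) = Some r"
    by (auto split: option.splits)
  show ?case
  proof (cases op)
    case (OAdd i j)
    with u have ij: "i < length vs" "j < length vs" "u = vs!i + vs!j"
      by (auto simp: getv_def split: if_splits)
    define a where "a = fst (E!i)"
    define b where "b = snd (E!i)"
    define c where "c = fst (E!j)"
    define d where "d = snd (E!j)"
    from sim_get[OF sim ij(1)] sim_get[OF sim ij(2)]
    have facts: "i < length E" "j < length E" "a < length ws" "dok ws b" "dv ws b \<noteq> 0"
       "vs!i = ws!a / dv ws b" "c < length ws" "dok ws d" "dv ws d \<noteq> 0" "vs!j = ws!c / dv ws d"
      by (simp_all add: a_def b_def c_def d_def)
    define p1 where "p1 = (nmul a d (length ws) :: 'f cop list \<times> nat)"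
    define p2 where "p2 = (nmul c b (length ws + length (fst p1)) :: 'f cop list \<times> nat)"
    obtain w where e: "exec (fst p1 @ fst p2) ws = Some (ws @ w)"
      and lw: "length w = length (fst p1) + length (fst p2)"
      and i1: "snd p1 < length ws + length w" and i2: "snd p2 < length ws + length w"
      and v1: "(ws @ w) ! snd p1 = ws!a * dv ws d" and v2: "(ws @ w) ! snd p2 = ws!c * dv ws b"
      using pre2[OF facts(3,7,4,8)] unfolding p1_def p2_def by blast
    define ws2 where "ws2 = ws @ w"
    define s where "s = ws2 ! snd p1 + ws2 ! snd p2"
    define ws3 where "ws3 = ws2 @ [s]"
    have e3: "exec [OAdd (snd p1) (snd p2)] ws2 = Some ws3"
      using i1 i2 by (simp add: ws3_def s_def ws2_def getv_def)
    define p4 where "p4 = (dmul b d (length ws3) :: 'f cop list \<times> nat option)"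
    have db3: "dok ws3 b" "dok ws3 d" unfolding ws3_def ws2_def append_assoc
      by (rule dok_app, fact)+
    obtain w4 where e4: "exec (fst p4) ws3 = Some (ws3 @ w4)" "length w4 = length (fst p4)"
      "dok (ws3 @ w4) (snd p4)" "dv (ws3 @ w4) (snd p4) = dv ws3 b * dv ws3 d"
      using dmul_exec[OF db3] unfolding p4_def by blast
    define ws4 where "ws4 = ws3 @ w4"
    have L2: "length ws + length (fst p1) + length (fst p2) = length ws2" using lw by (simp add: ws2_def)
    have L3: "Suc (length ws2) = length ws3" by (simp add: ws3_def)
    have L4: "length ws3 + length (fst p4) = length ws4" using e4(2) by (simp add: ws4_def)
    have eall: "exec (fst p1 @ fst p2 @ [OAdd (snd p1) (snd p2)] @ fst p4) ws = Some ws4"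
    proof -
      have "fst p1 @ fst p2 @ [OAdd (snd p1) (snd p2)] @ fst p4
            = ((fst p1 @ fst p2) @ [OAdd (snd p1) (snd p2)]) @ fst p4" by simp
      then show ?thesis using e e3 e4(1)
        by (simp only: exec_append option.case ws2_def[symmetric] ws4_def)
    qed
    have trE: "tr E (length ws) (Comp op t) = comps (fst p1 @ fst p2 @ [OAdd (snd p1) (snd p2)] @ fst p4)
                 (tr (E @ [(length ws2, snd p4)]) (length ws4) t)"
      apply (simp only: OAdd tr.simps cop.case Let_def facts(1,2) simp_thms if_True)
      apply (fold a_def b_def c_def d_def)
      apply (fold p1_def)
      apply (fold p2_def)
      apply (unfold L2)
      apply (unfold L3)
      apply (fold p4_def)
      apply (unfold L4)
      apply (rule refl)
      done
    have dv3: "dv ws3 b = dv ws b" "dv ws3 d = dv ws d" unfolding ws3_def ws2_def append_assoc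
      by (rule dv_app, fact)+
    have s4: "ws4 ! length ws2 = s" by (simp add: ws4_def ws3_def nth_append)
    have sim4: "sim (E @ [(length ws2, snd p4)]) (vs @ [u]) ws4"
    proof (rule sim_ext)
      show "sim E vs ws4" unfolding ws4_def ws3_def ws2_def append_assoc by (rule sim_app, fact)
      show "length ws2 < length ws4" using L3 L4 by linarith
      show "dok ws4 (snd p4)" using e4(3) by (simp add: ws4_def)
      show "dv ws4 (snd p4) \<noteq> 0" using e4(4) dv3 facts(5,9) by (simp add: ws4_def)
      have num: "ws4 ! length ws2 = ws!a * dv ws d + ws!c * dv ws b"
        using s4 v1 v2 by (simp add: s_def ws2_def)
      have den: "dv ws4 (snd p4) = dv ws b * dv ws d"
        using e4(4) dv3 by (simp add: ws4_def)
      show "u = ws4 ! length ws2 / dv ws4 (snd p4)"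
        unfolding num den ij(3) facts(6) facts(10) using facts(5,9) by (simp add: field_simps)
    qed
    show ?thesis unfolding trE run_comps[OF eall] by (rule Comp.IH[OF rt sim4])
  next
    case (OSub i j)
    with u have ij: "i < length vs" "j < length vs" "u = vs!i - vs!j"
      by (auto simp: getv_def split: if_splits)
    define a where "a = fst (E!i)"
    define b where "b = snd (E!i)"
    define c where "c = fst (E!j)"
    define d where "d = snd (E!j)"
    from sim_get[OF sim ij(1)] sim_get[OF sim ij(2)]
    have facts: "i < length E" "j < length E" "a < length ws" "dok ws b" "dv ws b \<noteq> 0"
       "vs!i = ws!a / dv ws b" "c < length ws" "dok ws d" "dv ws d \<noteq> 0" "vs!j = ws!c / dv ws d"
      by (simp_all add: a_def b_def c_def d_def)
    define p1 where "p1 = (nmul a d (length ws) :: 'f cop list \<times> nat)"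
    define p2 where "p2 = (nmul c b (length ws + length (fst p1)) :: 'f cop list \<times> nat)"
    obtain w where e: "exec (fst p1 @ fst p2) ws = Some (ws @ w)"
      and lw: "length w = length (fst p1) + length (fst p2)"
      and i1: "snd p1 < length ws + length w" and i2: "snd p2 < length ws + length w"
      and v1: "(ws @ w) ! snd p1 = ws!a * dv ws d" and v2: "(ws @ w) ! snd p2 = ws!c * dv ws b"
      using pre2[OF facts(3,7,4,8)] unfolding p1_def p2_def by blast
    define ws2 where "ws2 = ws @ w"
    define s where "s = ws2 ! snd p1 - ws2 ! snd p2"
    define ws3 where "ws3 = ws2 @ [s]"
    have e3: "exec [OSub (snd p1) (snd p2)] ws2 = Some ws3"
      using i1 i2 by (simp add: ws3_def s_def ws2_def getv_def)
    define p4 where "p4 = (dmul b d (length ws3) :: 'f cop list \<times> nat option)"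
    have db3: "dok ws3 b" "dok ws3 d" unfolding ws3_def ws2_def append_assoc
      by (rule dok_app, fact)+
    obtain w4 where e4: "exec (fst p4) ws3 = Some (ws3 @ w4)" "length w4 = length (fst p4)"
      "dok (ws3 @ w4) (snd p4)" "dv (ws3 @ w4) (snd p4) = dv ws3 b * dv ws3 d"
      using dmul_exec[OF db3] unfolding p4_def by blast
    define ws4 where "ws4 = ws3 @ w4"
    have L2: "length ws + length (fst p1) + length (fst p2) = length ws2" using lw by (simp add: ws2_def)
    have L3: "Suc (length ws2) = length ws3" by (simp add: ws3_def)
    have L4: "length ws3 + length (fst p4) = length ws4" using e4(2) by (simp add: ws4_def)
    have eall: "exec (fst p1 @ fst p2 @ [OSub (snd p1) (snd p2)] @ fst p4) ws = Some ws4"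
    proof -
      have "fst p1 @ fst p2 @ [OSub (snd p1) (snd p2)] @ fst p4
            = ((fst p1 @ fst p2) @ [OSub (snd p1) (snd p2)]) @ fst p4" by simp
      then show ?thesis using e e3 e4(1)
        by (simp only: exec_append option.case ws2_def[symmetric] ws4_def)
    qed
    have trE: "tr E (length ws) (Comp op t) = comps (fst p1 @ fst p2 @ [OSub (snd p1) (snd p2)] @ fst p4)
                 (tr (E @ [(length ws2, snd p4)]) (length ws4) t)"
      apply (simp only: OSub tr.simps cop.case Let_def facts(1,2) simp_thms if_True)
      apply (fold a_def b_def c_def d_def)
      apply (fold p1_def)
      apply (fold p2_def)
      apply (unfold L2)
      apply (unfold L3)
      apply (fold p4_def)
      apply (unfold L4)
      apply (rule refl)
      done
    have dv3: "dv ws3 b = dv ws b" "dv ws3 d = dv ws d" unfolding ws3_def ws2_def append_assoc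
      by (rule dv_app, fact)+
    have s4: "ws4 ! length ws2 = s" by (simp add: ws4_def ws3_def nth_append)
    have sim4: "sim (E @ [(length ws2, snd p4)]) (vs @ [u]) ws4"
    proof (rule sim_ext)
      show "sim E vs ws4" unfolding ws4_def ws3_def ws2_def append_assoc by (rule sim_app, fact)
      show "length ws2 < length ws4" using L3 L4 by linarith
      show "dok ws4 (snd p4)" using e4(3) by (simp add: ws4_def)
      show "dv ws4 (snd p4) \<noteq> 0" using e4(4) dv3 facts(5,9) by (simp add: ws4_def)
      have num: "ws4 ! length ws2 = ws!a * dv ws d - ws!c * dv ws b"
        using s4 v1 v2 by (simp add: s_def ws2_def)
      have den: "dv ws4 (snd p4) = dv ws b * dv ws d"
        using e4(4) dv3 by (simp add: ws4_def)
      show "u = ws4 ! length ws2 / dv ws4 (snd p4)"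
        unfolding num den ij(3) facts(6) facts(10) using facts(5,9) by (simp add: field_simps)
    qed
    show ?thesis unfolding trE run_comps[OF eall] by (rule Comp.IH[OF rt sim4])
  next
    case (OMul i j)
    with u have ij: "i < length vs" "j < length vs" "u = vs!i * vs!j"
      by (auto simp: getv_def split: if_splits)
    define a where "a = fst (E!i)"
    define b where "b = snd (E!i)"
    define c where "c = fst (E!j)"
    define d where "d = snd (E!j)"
    from sim_get[OF sim ij(1)] sim_get[OF sim ij(2)]
    have facts: "i < length E" "j < length E" "a < length ws" "dok ws b" "dv ws b \<noteq> 0"
       "vs!i = ws!a / dv ws b" "c < length ws" "dok ws d" "dv ws d \<noteq> 0" "vs!j = ws!c / dv ws d"
      by (simp_all add: a_def b_def c_def d_def)
    define ws3 where "ws3 = ws @ [ws!a * ws!c]"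
    have e3: "exec [OMul a c] ws = Some ws3"
      using facts(3,7) by (simp add: ws3_def getv_def)
    define p4 where "p4 = (dmul b d (length ws3) :: 'f cop list \<times> nat option)"
    have db3: "dok ws3 b" "dok ws3 d" unfolding ws3_def
      by (rule dok_app, fact)+
    obtain w4 where e4: "exec (fst p4) ws3 = Some (ws3 @ w4)" "length w4 = length (fst p4)"
      "dok (ws3 @ w4) (snd p4)" "dv (ws3 @ w4) (snd p4) = dv ws3 b * dv ws3 d"
      using dmul_exec[OF db3] unfolding p4_def by blast
    define ws4 where "ws4 = ws3 @ w4"
    have L3: "Suc (length ws) = length ws3" by (simp add: ws3_def)
    have L4: "length ws3 + length (fst p4) = length ws4" using e4(2) by (simp add: ws4_def)
    have eall: "exec (OMul a c # fst p4) ws = Some ws4"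
    proof -
      have "OMul a c # fst p4 = [OMul a c] @ fst p4" by simp
      then show ?thesis using e3 e4(1)
        by (simp only: exec_append option.case ws4_def)
    qed
    have trE: "tr E (length ws) (Comp op t) = comps (OMul a c # fst p4)
                 (tr (E @ [(length ws, snd p4)]) (length ws4) t)"
      apply (simp only: OMul tr.simps cop.case Let_def facts(1,2) simp_thms if_True)
      apply (fold a_def b_def c_def d_def)
      apply (unfold L3)
      apply (fold p4_def)
      apply (unfold L4)
      apply (rule refl)
      done
    have dv3: "dv ws3 b = dv ws b" "dv ws3 d = dv ws d" unfolding ws3_def
      by (rule dv_app, fact)+
    have sim4: "sim (E @ [(length ws, snd p4)]) (vs @ [u]) ws4"
    proof (rule sim_ext)
      show "sim E vs ws4" unfolding ws4_def ws3_def append_assoc by (rule sim_app, fact)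
      show "length ws < length ws4" using L3 L4 by linarith
      show "dok ws4 (snd p4)" using e4(3) by (simp add: ws4_def)
      show "dv ws4 (snd p4) \<noteq> 0" using e4(4) dv3 facts(5,9) by (simp add: ws4_def)
      have num: "ws4 ! length ws = ws!a * ws!c"
        by (simp add: ws4_def ws3_def nth_append)
      have den: "dv ws4 (snd p4) = dv ws b * dv ws d"
        using e4(4) dv3 by (simp add: ws4_def)
      show "u = ws4 ! length ws / dv ws4 (snd p4)"
        unfolding num den ij(3) facts(6) facts(10) using facts(5,9) by (simp add: field_simps)
    qed
    show ?thesis unfolding trE run_comps[OF eall] by (rule Comp.IH[OF rt sim4])
  next
    case (ODiv i j)
    with u have ij: "i < length vs" "j < length vs" "vs!j \<noteq> 0" "u = vs!i / vs!j"
      by (auto simp: getv_def split: if_splits)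
    define a where "a = fst (E!i)"
    define b where "b = snd (E!i)"
    define c where "c = fst (E!j)"
    define d where "d = snd (E!j)"
    from sim_get[OF sim ij(1)] sim_get[OF sim ij(2)]
    have facts: "i < length E" "j < length E" "a < length ws" "dok ws b" "dv ws b \<noteq> 0"
       "vs!i = ws!a / dv ws b" "c < length ws" "dok ws d" "dv ws d \<noteq> 0" "vs!j = ws!c / dv ws d"
      by (simp_all add: a_def b_def c_def d_def)
    have c0: "ws!c \<noteq> 0" using ij(3) facts(10) by auto
    define p1 where "p1 = (nmul a d (length ws) :: 'f cop list \<times> nat)"
    define p2 where "p2 = (nmul c b (length ws + length (fst p1)) :: 'f cop list \<times> nat)"
    obtain w where e: "exec (fst p1 @ fst p2) ws = Some (ws @ w)"
      and lw: "length w = length (fst p1) + length (fst p2)"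
      and i1: "snd p1 < length ws + length w" and i2: "snd p2 < length ws + length w"
      and v1: "(ws @ w) ! snd p1 = ws!a * dv ws d" and v2: "(ws @ w) ! snd p2 = ws!c * dv ws b"
      using pre2[OF facts(3,7,4,8)] unfolding p1_def p2_def by blast
    define ws2 where "ws2 = ws @ w"
    have L2: "length ws + length (fst p1) + length (fst p2) = length ws2" using lw by (simp add: ws2_def)
    have trE: "tr E (length ws) (Comp op t) = comps (fst p1 @ fst p2)
                 (tr (E @ [(snd p1, Some (snd p2))]) (length ws2) t)"
      apply (simp only: ODiv tr.simps cop.case Let_def facts(1,2) simp_thms if_True)
      apply (fold a_def b_def c_def d_def)
      apply (fold p1_def)
      apply (fold p2_def)
      apply (unfold L2)
      apply (rule refl)
      done
    have sim4: "sim (E @ [(snd p1, Some (snd p2))]) (vs @ [u]) ws2"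
    proof (rule sim_ext)
      show "sim E vs ws2" unfolding ws2_def by (rule sim_app, fact)
      show "snd p1 < length ws2" using i1 by (simp add: ws2_def)
      show "dok ws2 (Some (snd p2))" using i2 by (simp add: ws2_def dok_def)
      have den: "dv ws2 (Some (snd p2)) = ws!c * dv ws b" using v2 by (simp add: dv_def ws2_def)
      show "dv ws2 (Some (snd p2)) \<noteq> 0" unfolding den using c0 facts(5) by simp
      have num: "ws2 ! snd p1 = ws!a * dv ws d" using v1 by (simp add: ws2_def)
      show "u = ws2 ! snd p1 / dv ws2 (Some (snd p2))"
        unfolding num den ij(4) facts(6) facts(10) using facts(5,9) c0 by (simp add: field_simps)
    qed
    have eall: "exec (fst p1 @ fst p2) ws = Some ws2" using e by (simp add: ws2_def)
    show ?thesis unfolding trE run_comps[OF eall] by (rule Comp.IH[OF rt sim4])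
  next
    case (OConst c)
    with u have uc: "u = c" by simp
    have trE: "tr E (length ws) (Comp op t) = Comp (OConst c) (tr (E @ [(length ws, None)]) (length (ws @ [c])) t)"
      by (simp add: OConst)
    have sim4: "sim (E @ [(length ws, None)]) (vs @ [u]) (ws @ [c])"
      by (rule sim_ext) (auto simp: sim_app[OF sim] dok_def dv_def uc)
    show ?thesis unfolding trE using Comp.IH[OF rt sim4] by simp
  next
    case (OScale c i)
    with u have ij: "i < length vs" "u = c * vs!i"
      by (auto simp: getv_def split: if_splits)
    define a where "a = fst (E!i)"
    define b where "b = snd (E!i)"
    from sim_get[OF sim ij(1)]
    have facts: "i < length E" "a < length ws" "dok ws b" "dv ws b \<noteq> 0" "vs!i = ws!a / dv ws b"
      by (simp_all add: a_def b_def)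
    have trE: "tr E (length ws) (Comp op t) = Comp (OScale c a) (tr (E @ [(length ws, b)]) (length (ws @ [c * ws!a])) t)"
      by (simp add: OScale facts(1) a_def b_def)
    have sim4: "sim (E @ [(length ws, b)]) (vs @ [u]) (ws @ [c * ws!a])"
    proof (rule sim_ext)
      show "sim E vs (ws @ [c * ws!a])" by (rule sim_app, fact)
      show "dok (ws @ [c * ws ! a]) b" by (rule dok_app, fact)
      have "dv (ws @ [c * ws ! a]) b = dv ws b" by (rule dv_app, fact)
      then show "dv (ws @ [c * ws ! a]) b \<noteq> 0" "u = (ws @ [c * ws ! a]) ! length ws / dv (ws @ [c * ws ! a]) b"
        using facts(4,5) ij(2) by auto
    qed simp
    show ?thesis unfolding trE using Comp.IH[OF rt sim4] facts(2) by (simp add: getv_def)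
  qed
next
  case (Dec i j t1 t2)
  note sim = Dec.prems(2)
  from Dec.prems(1) obtain bb where tb: "test vs i j = Some bb"
    and rb: "run (if bb then t1 else t2) vs = Some r"
    by (auto split: option.splits bool.splits)
  from tb have ij: "i < length vs" "j < length vs" "bb = (vs!i = vs!j)"
    by (auto simp: test_def getv_def split: if_splits)
  define a where "a = fst (E!i)"
  define b where "b = snd (E!i)"
  define c where "c = fst (E!j)"
  define d where "d = snd (E!j)"
  from sim_get[OF sim ij(1)] sim_get[OF sim ij(2)]
  have facts: "i < length E" "j < length E" "a < length ws" "dok ws b" "dv ws b \<noteq> 0"
     "vs!i = ws!a / dv ws b" "c < length ws" "dok ws d" "dv ws d \<noteq> 0" "vs!j = ws!c / dv ws d"
    by (simp_all add: a_def b_def c_def d_def)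
  define p1 where "p1 = (nmul a d (length ws) :: 'f cop list \<times> nat)"
  define p2 where "p2 = (nmul c b (length ws + length (fst p1)) :: 'f cop list \<times> nat)"
  obtain w where e: "exec (fst p1 @ fst p2) ws = Some (ws @ w)"
    and lw: "length w = length (fst p1) + length (fst p2)"
    and i1: "snd p1 < length ws + length w" and i2: "snd p2 < length ws + length w"
    and v1: "(ws @ w) ! snd p1 = ws!a * dv ws d" and v2: "(ws @ w) ! snd p2 = ws!c * dv ws b"
    using pre2[OF facts(3,7,4,8)] unfolding p1_def p2_def by blast
  define ws2 where "ws2 = ws @ w"
  have L2: "length ws + length (fst p1) + length (fst p2) = length ws2" using lw by (simp add: ws2_def)
  have trE: "tr E (length ws) (Dec i j t1 t2) = comps (fst p1 @ fst p2)
               (Dec (snd p1) (snd p2) (tr E (length ws2) t1) (tr E (length ws2) t2))"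
    apply (simp only: tr.simps Let_def facts(1,2) simp_thms if_True)
    apply (fold a_def b_def c_def d_def)
    apply (fold p1_def)
    apply (fold p2_def)
    apply (unfold L2)
    apply (rule refl)
    done
  have eall: "exec (fst p1 @ fst p2) ws = Some ws2" using e by (simp add: ws2_def)
  have eqv: "(vs!i = vs!j) = (ws!a * dv ws d = ws!c * dv ws b)"
    unfolding facts(6) facts(10) using facts(5,9) by (simp add: field_simps)
  have tst: "test ws2 (snd p1) (snd p2) = Some bb"
    using i1 i2 v1 v2 ij(3) eqv by (simp add: test_def getv_def ws2_def)
  have sim2: "sim E vs ws2" unfolding ws2_def by (rule sim_app, fact)
  show ?case
  proof (cases bb)
    case True
    then show ?thesis unfolding trE run_comps[OF eall] using tst Dec.IH(1)[OF _ sim2] rb by simp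
  next
    case False
    then show ?thesis unfolding trE run_comps[OF eall] using tst Dec.IH(2)[OF _ sim2] rb by simp
  qed
qed


theorem lemma2:
  fixes T :: "'f::{field, finite} ctree" and X :: "'f set"
  assumes "decides T X"
  shows "\<exists>T'. decides T' X \<and> pruned T' \<and> polynomial T' \<and> height T' \<le> 4 * height T"
proof -
  define T1 where "T1 = tr [(0, None)] 1 T"
  have r1: "\<forall>x\<in>UNIV. run T1 [x] = Some (x \<in> X)"
  proof
    fix x :: 'f
    have s: "sim [(0, None)] [x] [x]" by (simp add: sim_def dok_def dv_def)
    have "run T [x] = Some (x \<in> X)" using assms by (simp add: decides_def)
    from tr_correct[OF this s] show "run T1 [x] = Some (x \<in> X)" by (simp add: T1_def)
  qed
  note P = prune_props[of UNIV T1 "\<lambda>x. [x]" "\<lambda>x. x \<in> X", OF r1]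
  define T' where "T' = prune T1 UNIV (\<lambda>x. [x])"
  have "decides T' X" using P by (simp add: decides_def T'_def)
  moreover have "pruned T'" using P by (simp add: pruned_def T'_def)
  moreover have "polynomial T'" using P tr_poly[of "[(0, None)]" 1 T] unfolding T'_def T1_def by blast
  moreover have "height T' \<le> 4 * height T" using P tr_height[of "[(0, None)]" 1 T]
    unfolding T'_def T1_def by linarith
  ultimately show ?thesis by blast
qed

end
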